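(* Let $\mathbf{Y}\sim\mathcal{MMN}_p(\boldsymbol{\xi},\mathbf{\Omega},\boldsymbol{\delta};H)$. Then there exists a $p\times p$ matrix $\mathbf{A}_*$ such that $\mathbf{Z}^*=\mathbf{A}_*(\mathbf{Y}-\boldsymbol{\xi})\sim\mathcal{MMN}_p(\mathbf{0},\mathbf{I}_p,\boldsymbol{\delta}_{\mathbf{Z}^*};H)$ with $\boldsymbol{\delta}_{\mathbf{Z}^*}=(\delta_*,0,\dots,0)^\top$, where $\delta_*=(\boldsymbol{\delta}^\top\overline{\mathbf{\Omega}}^{-1}\boldsymbol{\delta})^{1/2}$; in particular at most one component of $\boldsymbol{\delta}_{\mathbf{Z}^*}$ is nonzero.
   Context: For $d\ge1$, $\boldsymbol{\xi}\in\mathbb{R}^d$, a $d\times d$ symmetric positive definite $\mathbf{\Omega}$, put $\boldsymbol{\omega}=\mathrm{diag}(\mathbf{\Omega}_{11}^{1/2},\dots,\mathbf{\Omega}_{dd}^{1/2})$ and $\overline{\mathbf{\Omega}}=\boldsymbol{\omega}^{-1}\mathbf{\Omega}\boldsymbol{\omega}^{-1}$; let $\boldsymbol{\delta}\in\mathbb{R}^d$ with $\overline{\mathbf{\Omega}}-\boldsymbol{\delta}\boldsymbol{\delta}^\top$ positive definite. For a real random variable $U$ with CDF $H$ and $\mathbf{Z}\sim\mathcal{N}_d(\mathbf{0},\overline{\mathbf{\Omega}}-\boldsymbol{\delta}\boldsymbol{\delta}^\top)$ independent of $U$, the law of $\boldsymbol{\xi}+\boldsymbol{\omega}(\boldsymbol{\delta}U+\mathbf{Z})$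 is denoted $\mathcal{MMN}_d(\boldsymbol{\xi},\mathbf{\Omega},\boldsymbol{\delta};H)$. *)

theory Defs
  imports "HOL-Probability.Probability"
begin

text \<open>A CDF: nondecreasing, right-continuous, limits 0 and 1.\<close>
definition is_cdf :: "(real \<Rightarrow> real) \<Rightarrow> bool" where
  "is_cdf H \<longleftrightarrow> (\<forall>x y. x \<le> y \<longrightarrow> H x \<le> H y) \<and> (\<forall>a. continuous (at_right a) H)
     \<and> (H \<longlongrightarrow> 0) at_bot \<and> (H \<longlongrightarrow> 1) at_top"

text \<open>Symmetric positive definite matrices.\<close>
definition sym_posdef :: "real^'n^'n \<Rightarrow> bool" where
  "sym_posdef S \<longleftrightarrow> transpose S = S \<and> (\<forall>x. x \<noteq> 0 \<longrightarrow> x \<bullet> (S *v x) > 0)"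

definition outer :: "real^'n \<Rightarrow> real^'n^'n" where
  "outer d = (\<chi> i j. d$i * d$j)"

text \<open>omega = diag(Omega_11^(1/2), ..., Omega_dd^(1/2)) and the correlation matrix Omega bar.\<close>
definition omega_diag :: "real^'n^'n \<Rightarrow> real^'n^'n" where
  "omega_diag S = (\<chi> i j. if i = j then sqrt (S$i$i) else 0)"

definition Omega_bar :: "real^'n^'n \<Rightarrow> real^'n^'n" where
  "Omega_bar S = matrix_inv (omega_diag S) ** S ** matrix_inv (omega_diag S)"

text \<open>Standard normal vector (iid N(0,1) coordinates) and centred Gaussian N_d(0,Sigma),
  realised as L W with L L^T = Sigma (the law does not depend on the choice of L).\<close>
definition gaussian :: "real^'n^'n \<Rightarrow> (real^'n) measure" where
  "gaussian S = distr (distr (PiM UNIV (\<lambda>_::'n. density lborel std_normal_density)) borel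
      (\<lambda>w. \<chi> i. w i)) borel (\<lambda>w. (SOME L. L ** transpose L = S) *v w)"

text \<open>MMN_d(xi, Omega, delta; H): law of xi + omega (delta U + Z), U ~ H independent of
  Z ~ N_d(0, Omega bar - delta delta^T).\<close>
definition MMN :: "real^'n \<Rightarrow> real^'n^'n \<Rightarrow> real^'n \<Rightarrow> (real \<Rightarrow> real) \<Rightarrow> (real^'n) measure" where
  "MMN xi S d H = distr (interval_measure H \<Otimes>\<^sub>M gaussian (Omega_bar S - outer d)) borel
      (\<lambda>(u, z). xi + omega_diag S *v (u *\<^sub>R d + z))"

end

theory Submission
  imports Defs
begin


lemma inner_axis_left: "axis k (1::real) \<bullet> x = x $ k"
  by (simp add: inner_commute inner_axis)

lemma outer_mult: "outer c *v x = (c \<bullet> x) *\<^sub>R c"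
  by (simp add: outer_def vec_eq_iff matrix_vector_mult_def inner_vec_def sum_distrib_left mult_ac)

lemma scaleR_mat_vec: "((k::real) *\<^sub>R (A::real^'n^'m)) *v v = k *\<^sub>R (A *v v)"
  by (simp add: vec_eq_iff matrix_vector_mult_def sum_distrib_left mult.assoc)

lemma posdef_invertible:
  fixes X :: "real^'n^'n"
  assumes "\<forall>x. x \<noteq> 0 \<longrightarrow> x \<bullet> (X *v x) > 0"
  shows "invertible X"
proof -
  have "\<forall>x. X *v x = 0 \<longrightarrow> x = 0"
    using assms by (metis inner_zero_right less_irrefl)
  then show ?thesis
    using matrix_left_invertible_ker invertible_left_inverse by blast
qed

lemma chol_aux:
  fixes I :: "'n::finite set"
  shows "\<forall>X::real^'n^'n. transpose X = X \<longrightarrow>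
     (\<forall>x. x \<noteq> 0 \<longrightarrow> (\<forall>i. i \<notin> I \<longrightarrow> x$i = 0) \<longrightarrow> x \<bullet> (X *v x) > 0) \<longrightarrow>
     (\<exists>L::real^'n^'n. (\<forall>i\<in>I. \<forall>j\<in>I. (\<Sum>m\<in>I. L$i$m * L$j$m) = X$i$j) \<and>
        (\<forall>i m. m \<in> I \<longrightarrow> i \<notin> I \<longrightarrow> L$i$m = 0))"
proof (induction I rule: finite_induct[OF finite])
  case 1
  then show ?case by (intro allI impI exI[of _ 0]) auto
next
  case (2 k I)
  show ?case
  proof (intro allI impI)
    fix X :: "real^'n^'n"
    assume sym: "transpose X = X"
      and pd: "\<forall>x. x \<noteq> 0 \<longrightarrow> (\<forall>i. i \<notin> insert k I \<longrightarrow> x$i = 0) \<longrightarrow> x \<bullet> (X *v x) > 0"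
    have symX: "X$i$j = X$j$i" for i j
      using sym by (metis transpose_def vec_lambda_beta)
    define a where "a = X$k$k"
    have "axis k (1::real) \<bullet> (X *v axis k 1) > 0"
      using pd by (auto simp: axis_def vec_eq_iff)
    then have apos: "a > 0"
      by (simp add: a_def inner_axis_left matrix_vector_mult_basis column_def)
    define c where "c = (\<chi> i. X$i$k)"
    define C where "C = X - (1/a) *\<^sub>R outer c"
    have symC: "transpose C = C"
      using symX by (simp add: C_def vec_eq_iff transpose_def outer_def mult.commute)
    have pdC: "\<forall>x. x \<noteq> 0 \<longrightarrow> (\<forall>i. i \<notin> I \<longrightarrow> x$i = 0) \<longrightarrow> x \<bullet> (C *v x) > 0"
    proof (intro allI impI)
      fix x :: "real^'n"
      assume x0: "x \<noteq> 0" and xs: "\<forall>i. i \<notin> I \<longrightarrow> x$i = 0"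
      define t where "t = (c \<bullet> x) / a"
      define y where "y = x - t *\<^sub>R axis k 1"
      have xk: "x$k = 0" using xs 2(2) by auto
      have y0: "y \<noteq> 0"
      proof
        assume "y = 0"
        then have "x$i = 0" for i
          using xk by (cases "i = k") (auto simp: y_def vec_eq_iff axis_def)
        then show False using x0 by (simp add: vec_eq_iff)
      qed
      have ys: "\<forall>i. i \<notin> insert k I \<longrightarrow> y$i = 0"
        using xs by (auto simp: y_def axis_def)
      have Xa: "X *v axis k 1 = c"
        by (simp add: matrix_vector_mult_basis column_def c_def)
      have Xxk: "(X *v x)$k = c \<bullet> x"
        by (simp add: matrix_vector_mult_def c_def inner_vec_def symX mult.commute)
      have ca: "c $ k = a" by (simp add: c_def a_def)
      have "y \<bullet> (X *v y) = x \<bullet> (X *v x) - (c \<bullet> x)^2 / a"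
        using apos
        by (simp add: y_def matrix_vector_mult_diff_distrib matrix_vector_mult_scaleR Xa inner_diff_left inner_diff_right
            inner_axis_left Xxk ca t_def inner_commute[of x c] power2_eq_square field_simps)
      moreover have "x \<bullet> (C *v x) = x \<bullet> (X *v x) - (c \<bullet> x)^2 / a"
        by (simp add: C_def matrix_vector_mult_diff_rdistrib scaleR_mat_vec outer_mult inner_diff_right
            inner_commute[of x c] power2_eq_square)
      ultimately show "x \<bullet> (C *v x) > 0"
        using pd y0 ys by auto
    qed
    obtain L' where L'1: "\<forall>i\<in>I. \<forall>j\<in>I. (\<Sum>m\<in>I. L'$i$m * L'$j$m) = C$i$j"
      and L'2: "\<forall>i m. m \<in> I \<longrightarrow> i \<notin> I \<longrightarrow> L'$i$m = 0"
      using 2(3) symC pdC by blast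
    define L where "L = (\<chi> i m. if m = k then (if i \<in> insert k I then X$i$k / sqrt a else 0) else L'$i$m)"
    have sq: "sqrt a * sqrt a = a" using apos by simp
    have sum_eq: "(\<Sum>m\<in>insert k I. L$i$m * L$j$m) = L$i$k * L$j$k + (\<Sum>m\<in>I. L'$i$m * L'$j$m)" for i j
    proof -
      have "(\<Sum>m\<in>I. L$i$m * L$j$m) = (\<Sum>m\<in>I. L'$i$m * L'$j$m)"
        using 2(2) by (intro sum.cong) (auto simp: L_def)
      then show ?thesis using 2 by (simp add: sum.insert)
    qed
    show "\<exists>L::real^'n^'n. (\<forall>i\<in>insert k I. \<forall>j\<in>insert k I. (\<Sum>m\<in>insert k I. L$i$m * L$j$m) = X$i$j) \<and>
        (\<forall>i m. m \<in> insert k I \<longrightarrow> i \<notin> insert k I \<longrightarrow> L$i$m = 0)"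
    proof (intro exI[of _ L] conjI ballI allI impI)
      fix i j assume i: "i \<in> insert k I" and j: "j \<in> insert k I"
      show "(\<Sum>m\<in>insert k I. L$i$m * L$j$m) = X$i$j"
      proof (cases "i = k")
        case True
        then have "(\<Sum>m\<in>I. L'$i$m * L'$j$m) = 0" using L'2 2(2) by simp
        then show ?thesis unfolding sum_eq using True j sq apos
          by (simp add: L_def symX[of j k] field_simps a_def)
      next
        case ik: False
        show ?thesis
        proof (cases "j = k")
          case True
          then have "(\<Sum>m\<in>I. L'$i$m * L'$j$m) = 0" using L'2 2(2) by simp
          then show ?thesis unfolding sum_eq using True i sq apos
            by (simp add: L_def field_simps a_def)
        next
          case False
          then have "i \<in> I" "j \<in> I" using i j ik by auto
          then have "(\<Sum>m\<in>I. L'$i$m * L'$j$m) = X$i$j - X$i$k * X$j$k / a"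
            using L'1 by (simp add: C_def outer_def c_def)
          then show ?thesis unfolding sum_eq using i j sq apos
            by (simp add: L_def field_simps)
        qed
      qed
    next
      fix i m assume "m \<in> insert k I" "i \<notin> insert k I"
      then show "L$i$m = 0" using L'2 by (auto simp: L_def)
    qed
  qed
qed

lemma cholesky:
  fixes X :: "real^'n^'n"
  assumes "transpose X = X" "\<forall>x. x \<noteq> 0 \<longrightarrow> x \<bullet> (X *v x) > 0"
  shows "\<exists>L::real^'n^'n. L ** transpose L = X \<and> invertible L"
proof -
  obtain L :: "real^'n^'n" where L: "\<forall>i j. (\<Sum>m\<in>UNIV. L$i$m * L$j$m) = X$i$j"
    using chol_aux[of "UNIV::'n set"] assms by auto
  have eq: "L ** transpose L = X"
    using L by (simp add: vec_eq_iff matrix_matrix_mult_def transpose_def)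
  have "det X \<noteq> 0" using posdef_invertible[OF assms(2)] invertible_det_nz by blast
  then have "det L \<noteq> 0" using eq det_mul det_transpose by (metis mult_zero_left)
  then have "invertible L" using invertible_det_nz by blast
  then show ?thesis using eq by blast
qed

lemma matrix_inv_eq:
  fixes A B :: "real^'n^'n"
  assumes "A ** B = mat 1"
  shows "matrix_inv A = B"
proof -
  have BA: "B ** A = mat 1" using assms matrix_left_right_inverse by blast
  have "\<exists>A'. A ** A' = mat 1 \<and> A' ** A = mat 1" using assms BA by blast
  then have "A ** matrix_inv A = mat 1 \<and> matrix_inv A ** A = mat 1"
    unfolding matrix_inv_def by (rule someI_ex)
  then have "matrix_inv A = matrix_inv A ** (A ** B)" using assms by simp
  also have "\<dots> = B" using \<open>A ** matrix_inv A = mat 1 \<and> matrix_inv A ** A = mat 1\<close>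
    by (simp add: matrix_mul_assoc)
  finally show ?thesis .
qed

lemma invertible_inv:
  fixes A :: "real^'n^'n"
  assumes "invertible A"
  shows "A ** matrix_inv A = mat 1" "matrix_inv A ** A = mat 1"
proof -
  have "\<exists>A'. A ** A' = mat 1 \<and> A' ** A = mat 1" using assms invertible_def by blast
  then have "A ** matrix_inv A = mat 1 \<and> matrix_inv A ** A = mat 1"
    unfolding matrix_inv_def by (rule someI_ex)
  then show "A ** matrix_inv A = mat 1" "matrix_inv A ** A = mat 1" by auto
qed

lemma outer_congr:
  fixes A :: "real^'n^'n"
  shows "A ** outer d ** transpose A = outer (A *v d)"
  by (simp add: vec_eq_iff outer_def matrix_matrix_mult_def transpose_def matrix_vector_mult_def
      sum_distrib_left sum_distrib_right mult_ac)

lemma omega_diag_one: "omega_diag (mat 1 :: real^'n^'n) = mat 1"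
  by (simp add: omega_diag_def mat_def vec_eq_iff)

lemma Omega_bar_one: "Omega_bar (mat 1 :: real^'n^'n) = mat 1"
proof -
  have "matrix_inv (mat 1 :: real^'n^'n) = mat 1" by (rule matrix_inv_eq) simp
  then show ?thesis by (simp add: Omega_bar_def omega_diag_one)
qed

lemma norm_axis_gen: "norm (axis k (c::real)) = \<bar>c\<bar>"
  by (simp add: norm_eq_sqrt_inner inner_axis)

lemma whiten:
  fixes Ob :: "real^'n^'n" and d :: "real^'n"
  assumes sym: "transpose Ob = Ob" and pd: "\<forall>x. x \<noteq> 0 \<longrightarrow> x \<bullet> (Ob *v x) > 0"
  shows "\<exists>B::real^'n^'n. B ** Ob ** transpose B = mat 1 \<and>
     B *v d = axis k (sqrt (d \<bullet> (matrix_inv Ob *v d)))"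
proof -
  obtain C :: "real^'n^'n" where C: "C ** transpose C = Ob" "invertible C"
    using cholesky[OF sym pd] by blast
  define Ci where "Ci = matrix_inv C"
  have CCi: "C ** Ci = mat 1" "Ci ** C = mat 1" using invertible_inv[OF C(2)] Ci_def by auto
  have tr: "transpose C ** transpose Ci = mat 1"
    by (metis CCi(2) matrix_transpose_mul transpose_mat)
  have "Ob ** (transpose Ci ** Ci) = mat 1"
    by (metis C(1) CCi(1) tr matrix_mul_assoc matrix_mul_rid)
  then have inv: "matrix_inv Ob = transpose Ci ** Ci" by (rule matrix_inv_eq)
  define v where "v = Ci *v d"
  have "d \<bullet> (matrix_inv Ob *v d) = v \<bullet> v"
    by (simp add: inv v_def matrix_vector_mul_assoc[symmetric] transpose_matrix_vector
        dot_lmul_matrix[symmetric] inner_commute)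
  then have nv: "norm v = norm (axis k (sqrt (d \<bullet> (matrix_inv Ob *v d))))"
    by (simp only: norm_axis_gen) (simp add: norm_eq_sqrt_inner)
  obtain f where f: "orthogonal_transformation f" "f v = axis k (sqrt (d \<bullet> (matrix_inv Ob *v d)))"
    using orthogonal_transformation_exists[OF nv] by blast
  define R where "R = matrix f"
  have Rf: "(*v) R = f" using f(1) R_def orthogonal_transformation_linear matrix_vector_mul(2) by metis
  have oR: "orthogonal_matrix R" using f(1) R_def orthogonal_transformation_matrix by blast
  have RR: "R ** transpose R = mat 1" using oR orthogonal_matrix_def by blast
  show ?thesis
  proof (intro exI[of _ "R ** Ci"] conjI)
    have "R ** Ci ** Ob ** transpose (R ** Ci) = R ** (Ci ** C) ** (transpose C ** transpose Ci) ** transpose R"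
      by (simp add: C(1)[symmetric] matrix_transpose_mul matrix_mul_assoc)
    also have "\<dots> = mat 1" by (simp add: CCi tr RR)
    finally show "R ** Ci ** Ob ** transpose (R ** Ci) = mat 1" .
    show "(R ** Ci) *v d = axis k (sqrt (d \<bullet> (matrix_inv Ob *v d)))"
      using f(2) Rf by (simp add: matrix_vector_mul_assoc[symmetric] v_def)
  qed
qed



lemma borel_mat_vec[measurable]: "(\<lambda>x. (A::real^'n^'m) *v x) \<in> borel_measurable borel"
  by (intro borel_measurable_continuous_onI matrix_vector_mult_linear_continuous_on)

lemma emeasure_lebesgue_borel: "A \<in> sets borel \<Longrightarrow> emeasure lebesgue A = emeasure lborel A"
  by (simp add: emeasure_completion main_part_sets)

lemma lborel_orth:
  fixes Q :: "real^('n::{finite,wellorder})^('n::{finite,wellorder})"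
  assumes Q: "orthogonal_matrix Q"
  shows "distr lborel borel (\<lambda>x. Q *v x) = lborel"
proof (rule lborel_eqI[symmetric])
  fix l u :: "(real,'n) vec"
  assume "\<And>b. b \<in> Basis \<Longrightarrow> l \<bullet> b \<le> u \<bullet> b"
  have QQ: "transpose Q ** Q = mat 1" "Q ** transpose Q = mat 1"
    using Q orthogonal_matrix_def by auto
  have pre: "(\<lambda>x. Q *v x) -` box l u = (\<lambda>x. transpose Q *v x) ` box l u"
  proof (intro set_eqI iffI)
    fix x assume "x \<in> (\<lambda>x. Q *v x) -` box l u"
    moreover have "x = transpose Q *v (Q *v x)" by (simp add: matrix_vector_mul_assoc QQ)
    ultimately show "x \<in> (\<lambda>x. transpose Q *v x) ` box l u" by blast
  next
    fix x assume "x \<in> (\<lambda>x. transpose Q *v x) ` box l u"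
    then obtain y where "y \<in> box l u" "x = transpose Q *v y" by blast
    moreover have "Q *v (transpose Q *v y) = y" by (simp only: matrix_vector_mul_assoc QQ matrix_vector_mul_lid)
    ultimately show "x \<in> (\<lambda>x. Q *v x) -` box l u" by simp
  qed
  have ot: "orthogonal_transformation (\<lambda>x. transpose Q *v x)"
    using Q by (simp del: transpose_matrix_vector add: orthogonal_transformation_matrix matrix_of_matrix_vector_mul
        orthogonal_matrix_transpose matrix_vector_mul_linear)
  have bpre: "(\<lambda>x. Q *v x) -` box l u \<in> sets borel"
    using measurable_sets_borel[OF borel_mat_vec[of Q], of "box l u"] by simp
  have lm: "(\<lambda>x. transpose Q *v x) ` box l u \<in> lmeasurable"
    using measurable_orthogonal_image[OF ot lmeasurable_box] .
  have "emeasure (distr lborel borel (\<lambda>x. Q *v x)) (box l u) = emeasure lborel ((\<lambda>x. Q *v x) -` box l u)"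
    by (simp add: emeasure_distr)
  also have "\<dots> = emeasure lebesgue ((\<lambda>x. transpose Q *v x) ` box l u)"
    using bpre pre by (simp add: emeasure_lebesgue_borel)
  also have "\<dots> = ennreal (measure lebesgue ((\<lambda>x. transpose Q *v x) ` box l u))"
    using lm by (simp add: emeasure_eq_measure2)
  also have "\<dots> = ennreal (measure lebesgue (box l u))"
    using measure_orthogonal_image[OF ot lmeasurable_box] by simp
  also have "\<dots> = emeasure lebesgue (box l u)"
    using lmeasurable_box by (simp add: emeasure_eq_measure2)
  also have "\<dots> = emeasure lborel (box l u)"
    by (simp add: emeasure_lebesgue_borel)
  finally show "emeasure (distr lborel borel (\<lambda>x. Q *v x)) (box l u) = (\<Prod>b\<in>Basis. (u - l) \<bullet> b)"
    using \<open>\<And>b. b \<in> Basis \<Longrightarrow> l \<bullet> b \<le> u \<bullet> b\<close> by simp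
qed simp

definition G0 :: "(real^'n) measure" where
  "G0 = distr (PiM UNIV (\<lambda>_::'n. std_normal_distribution)) borel vec_lambda"

definition gdens :: "real^'n \<Rightarrow> real" where
  "gdens x = (\<Prod>i\<in>UNIV. std_normal_density (x$i))"

lemma gaussian_G0: "gaussian S = distr G0 borel (\<lambda>w. (SOME L::real^'n^'n. L ** transpose L = S) *v w)"
  by (simp add: gaussian_def G0_def)

lemma borel_vec_nth[measurable]: "(\<lambda>x::real^'n. x$i) \<in> borel_measurable borel"
  by (intro borel_measurable_continuous_onI continuous_on_component continuous_on_id)

lemma gdens_measurable[measurable]: "gdens \<in> borel_measurable borel"
  unfolding gdens_def by measurable

lemma sets_SN: "sets std_normal_distribution = sets borel" by simp

lemma vec_lambda_measurable_borel:
  "vec_lambda \<in> borel_measurable (PiM UNIV (\<lambda>_::'n::finite. (borel::real measure)))"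
proof (subst borel_measurable_euclidean_space, intro ballI)
  fix b :: "real^'n" assume "b \<in> Basis"
  then obtain i where b: "b = axis i 1" by (auto simp: Basis_vec_def)
  have "(\<lambda>x::'n\<Rightarrow>real. x i) \<in> borel_measurable (PiM UNIV (\<lambda>_::'n. (borel::real measure)))"
    by (rule measurable_component_singleton) simp
  then show "(\<lambda>x. vec_lambda x \<bullet> b) \<in> borel_measurable (PiM UNIV (\<lambda>_::'n. (borel::real measure)))"
    by (simp add: b inner_axis)
qed

lemma vec_lambda_measurable:
  "vec_lambda \<in> measurable (PiM UNIV (\<lambda>_::'n::finite. std_normal_distribution)) (borel :: (real^'n) measure)"
proof -
  have "sets (PiM UNIV (\<lambda>_::'n. std_normal_distribution)) = sets (PiM UNIV (\<lambda>_::'n. (borel::real measure)))"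
    by (rule sets_PiM_cong) simp_all
  then show ?thesis using vec_lambda_measurable_borel measurable_cong_sets by blast
qed

lemma proj_measurable:
  "(\<lambda>(x::real^'n) i. x$i) \<in> measurable borel (PiM UNIV (\<lambda>_::'n. (borel::real measure)))"
  by (rule measurable_PiM_single') auto

lemma SN_prob: "prob_space std_normal_distribution"
  by (rule prob_space_normal_density) simp

lemma Basis_vec_image: "(Basis :: (real^'n) set) = range (\<lambda>i. axis i 1)"
  by (auto simp: Basis_vec_def)

lemma PiM_SN_eq:
  "PiM UNIV (\<lambda>_::'n::finite. std_normal_distribution) =
     distr (density lborel (\<lambda>x. ennreal (gdens x))) (PiM UNIV (\<lambda>_::'n. (borel::real measure))) (\<lambda>x i. x$i)"
proof -
  interpret product_sigma_finite "\<lambda>_::'n. std_normal_distribution"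
    using SN_prob by (simp add: product_sigma_finite_def prob_space_imp_sigma_finite)
  show ?thesis
  proof (rule PiM_eqI[symmetric])
    show "finite (UNIV :: 'n set)" by simp
    show "sets (distr (density lborel (\<lambda>x. ennreal (gdens x))) (PiM UNIV (\<lambda>_::'n. (borel::real measure))) (\<lambda>x i. x$i))
        = sets (PiM UNIV (\<lambda>_::'n. std_normal_distribution))"
      by simp (rule sets_PiM_cong; simp)
    fix A :: "'n \<Rightarrow> real set"
    assume A: "\<And>i. i \<in> UNIV \<Longrightarrow> A i \<in> sets std_normal_distribution"
    then have Ab: "\<And>i. A i \<in> sets borel" by simp
    define S where "S = {x::real^'n. \<forall>i. x$i \<in> A i}"
    have pre: "(\<lambda>(x::real^'n) i. x$i) -` PiE UNIV A \<inter> space (density lborel (\<lambda>x. ennreal (gdens x))) = S"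
      by (auto simp: S_def PiE_def extensional_def)
    have Sb: "S \<in> sets borel"
    proof -
      have "PiE UNIV A \<in> sets (PiM UNIV (\<lambda>_::'n. (borel::real measure)))"
        using Ab by (intro sets_PiM_I_finite) auto
      from measurable_sets[OF proj_measurable this] show ?thesis
        using pre by simp
    qed
    define F where "F i t = ennreal (std_normal_density t) * indicator (A i) t" for i t
    have Fm: "F i \<in> borel_measurable borel" for i
      unfolding F_def using Ab by measurable
    have ptw: "ennreal (gdens x) * indicator S x = (\<Prod>i\<in>UNIV. F i (x$i))" for x
    proof (cases "x \<in> S")
      case True
      then show ?thesis
        by (simp add: gdens_def F_def S_def prod_ennreal[symmetric] normal_density_nonneg)
    next
      case False
      then obtain i where "x$i \<notin> A i" by (auto simp: S_def)
      then have "F i (x$i) = 0" by (simp add: F_def)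
      then have "(\<Prod>i\<in>UNIV. F i (x$i)) = 0" by (intro prod_zero) auto
      then show ?thesis using False by simp
    qed
    define idx where "idx b = (THE i::'n. b = axis i (1::real))" for b :: "real^'n"
    have idx: "idx (axis i 1) = i" for i
      unfolding idx_def by (rule the_equality) (auto simp: axis_eq_axis)
    have inj: "inj (\<lambda>i::'n. axis i (1::real))" by (auto simp: inj_def axis_eq_axis)
    have reidx: "(\<Prod>b\<in>Basis. h (idx b) (x \<bullet> b)) = (\<Prod>i\<in>UNIV. h i (x$i))" for h :: "'n \<Rightarrow> real \<Rightarrow> ennreal" and x :: "real^'n"
      unfolding Basis_vec_image by (simp add: prod.reindex[OF inj] idx inner_axis)
    have "emeasure (distr (density lborel (\<lambda>x. ennreal (gdens x))) (PiM UNIV (\<lambda>_::'n. (borel::real measure))) (\<lambda>x i. x$i)) (PiE UNIV A)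
        = emeasure (density lborel (\<lambda>x. ennreal (gdens x))) S"
      using pre Ab by (subst emeasure_distr) (auto intro!: proj_measurable sets_PiM_I_finite)
    also have "\<dots> = (\<integral>\<^sup>+x. ennreal (gdens x) * indicator S x \<partial>lborel)"
      using Sb by (simp add: emeasure_density)
    also have "\<dots> = (\<integral>\<^sup>+x. (\<Prod>b\<in>Basis. F (idx b) (x \<bullet> b)) \<partial>lborel)"
      by (simp add: ptw reidx)
    also have "\<dots> = (\<Prod>b\<in>Basis. (\<integral>\<^sup>+t. F (idx b) t \<partial>lborel))"
      by (rule nn_integral_lborel_prod) (auto intro: Fm)
    also have "\<dots> = (\<Prod>i\<in>UNIV. (\<integral>\<^sup>+t. F i t \<partial>lborel))"
      using reidx[of "\<lambda>i _. (\<integral>\<^sup>+t. F i t \<partial>lborel)" 0] by simp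
    also have "\<dots> = (\<Prod>i\<in>UNIV. emeasure std_normal_distribution (A i))"
      using Ab by (simp add: F_def emeasure_density)
    finally show "emeasure (distr (density lborel (\<lambda>x. ennreal (gdens x))) (PiM UNIV (\<lambda>_::'n. (borel::real measure))) (\<lambda>x i. x$i)) (PiE UNIV A)
        = (\<Prod>i\<in>UNIV. emeasure std_normal_distribution (A i))" .
  qed
qed

lemma G0_density: "G0 = density lborel (\<lambda>x::real^'n. ennreal (gdens x))"
proof -
  have "G0 = distr (distr (density lborel (\<lambda>x::real^'n. ennreal (gdens x))) (PiM UNIV (\<lambda>_::'n. (borel::real measure))) (\<lambda>x i. x$i)) borel vec_lambda"
    unfolding G0_def PiM_SN_eq ..
  also have "\<dots> = distr (density lborel (\<lambda>x::real^'n. ennreal (gdens x))) borel (vec_lambda \<circ> (\<lambda>(x::real^'n) i. x$i))"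
  proof (rule distr_distr)
    show "vec_lambda \<in> measurable (PiM UNIV (\<lambda>_::'n. (borel::real measure))) borel"
      by (rule vec_lambda_measurable_borel)
    show "(\<lambda>(x::real^'n) i. x$i) \<in> measurable (density lborel (\<lambda>x::real^'n. ennreal (gdens x))) (PiM UNIV (\<lambda>_::'n. (borel::real measure)))"
      using proj_measurable by simp
  qed
  also have "\<dots> = distr (density lborel (\<lambda>x::real^'n. ennreal (gdens x))) borel (\<lambda>x. x)"
    by (simp add: comp_def)
  also have "\<dots> = density lborel (\<lambda>x::real^'n. ennreal (gdens x))"
    by (rule distr_id2) simp
  finally show ?thesis .
qed


lemma gdens_alt: "gdens (x::real^'n) = (1 / sqrt (2*pi))^CARD('n) * exp (- (x \<bullet> x) / 2)"
proof -
  have "gdens x = (\<Prod>i\<in>UNIV. (1 / sqrt (2*pi)) * exp (- ((x$i)^2) / 2))"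
    by (simp add: gdens_def std_normal_density_def)
  also have "\<dots> = (1 / sqrt (2*pi))^CARD('n) * exp (\<Sum>i\<in>UNIV. - ((x$i)^2) / 2)"
    by (simp only: prod.distrib prod_constant) (simp add: exp_sum)
  also have "(\<Sum>i\<in>UNIV. - ((x$i)^2) / 2) = - (x \<bullet> x) / 2"
    by (simp add: inner_vec_def sum_divide_distrib[symmetric] sum_negf power2_eq_square)
  finally show ?thesis .
qed

lemma orth_inner:
  assumes "orthogonal_matrix (Q::real^'n^'n)"
  shows "(Q *v x) \<bullet> (Q *v x) = x \<bullet> x"
proof -
  have "transpose Q ** Q = mat 1" using assms orthogonal_matrix_def by blast
  then have "(Q *v x) \<bullet> (Q *v x) = x \<bullet> ((transpose Q ** Q) *v x)"
    by (metis dot_lmul_matrix inner_commute matrix_vector_mul_assoc transpose_matrix_vector)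
  then show ?thesis using \<open>transpose Q ** Q = mat 1\<close> by simp
qed

lemma sets_G0[simp]: "sets G0 = sets borel"
  by (simp add: G0_def)

lemma G0_orth:
  fixes Q :: "real^('n::{finite,wellorder})^('n::{finite,wellorder})"
  assumes Q: "orthogonal_matrix Q"
  shows "distr G0 borel (\<lambda>x. Q *v x) = G0"
proof -
  have "G0 = density (distr lborel borel (\<lambda>x. Q *v x)) (\<lambda>x. ennreal (gdens x))"
    unfolding G0_density lborel_orth[OF Q] ..
  also have "\<dots> = distr (density lborel (\<lambda>x. ennreal (gdens (Q *v x)))) borel (\<lambda>x. Q *v x)"
    by (rule density_distr) simp_all
  also have "\<dots> = distr G0 borel (\<lambda>x. Q *v x)"
    using orth_inner[OF Q] by (simp add: gdens_alt G0_density)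
  finally show ?thesis by simp
qed

lemma gaussian_eq:
  fixes L :: "real^('n::{finite,wellorder})^('n::{finite,wellorder})"
  assumes L: "invertible L"
  shows "gaussian (L ** transpose L) = distr G0 borel (\<lambda>w. L *v w)"
proof -
  define L1 where "L1 = (SOME L1::((real,'n) vec,'n) vec. L1 ** transpose L1 = L ** transpose L)"
  have L1: "L1 ** transpose L1 = L ** transpose L"
    unfolding L1_def by (rule someI[of _ L]) simp
  have "det L \<noteq> 0" using L invertible_det_nz by blast
  moreover have "det L1 * det L1 = det L * det L"
    using arg_cong[OF L1, of det] by (simp add: det_mul det_transpose)
  ultimately have "det L1 \<noteq> 0" by auto
  then have iL1: "invertible L1" using invertible_det_nz by blast
  define L1i where "L1i = matrix_inv L1"
  have LL: "L1 ** L1i = mat 1" "L1i ** L1 = mat 1" using invertible_inv[OF iL1] L1i_def by auto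
  define Q where "Q = L1i ** L"
  have "Q ** transpose Q = L1i ** (L1 ** transpose L1) ** transpose L1i"
    by (simp add: Q_def L1 matrix_transpose_mul matrix_mul_assoc)
  also have "\<dots> = (L1i ** L1) ** transpose (L1i ** L1)"
    by (simp add: matrix_transpose_mul matrix_mul_assoc)
  also have "\<dots> = mat 1" by (simp add: LL transpose_mat)
  finally have QQ: "Q ** transpose Q = mat 1" .
  then have oQ: "orthogonal_matrix Q"
    using matrix_left_right_inverse orthogonal_matrix_def by blast
  have LQ: "L1 ** Q = L" by (simp add: Q_def matrix_mul_assoc LL)
  have mG: "(\<lambda>x. A *v x) \<in> measurable G0 borel" for A :: "((real,'n) vec,'n) vec"
    using measurable_cong_sets[OF sets_G0 refl] borel_mat_vec by blast
  have "distr G0 borel (\<lambda>w. L *v w) = distr G0 borel ((\<lambda>w. L1 *v w) \<circ> (\<lambda>w. Q *v w))"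
    by (simp add: comp_def matrix_vector_mul_assoc LQ)
  also have "\<dots> = distr (distr G0 borel (\<lambda>w. Q *v w)) borel (\<lambda>w. L1 *v w)"
    by (rule distr_distr[symmetric]) (simp_all add: mG)
  also have "\<dots> = distr G0 borel (\<lambda>w. L1 *v w)" by (simp add: G0_orth[OF oQ])
  also have "\<dots> = gaussian (L ** transpose L)" by (simp add: gaussian_G0 L1_def)
  finally show ?thesis by simp
qed



lemma mat_sub_ldistrib: "(A::real^'n^'m) ** (B - C) = A ** B - A ** C"
  by (simp add: vec_eq_iff matrix_matrix_mult_def sum_subtractf algebra_simps)

lemma mat_sub_rdistrib: "((B::real^'n^'m) - C) ** (A::real^'k^'n) = B ** A - C ** A"
  by (simp add: vec_eq_iff matrix_matrix_mult_def sum_subtractf algebra_simps)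

lemma cont_mv[continuous_intros]:
  "continuous_on S f \<Longrightarrow> continuous_on S (\<lambda>x. (A::real^'n^'m) *v f x)"
  using continuous_on_compose2[OF matrix_vector_mult_linear_continuous_on[of UNIV A], of S f] by auto

lemma G0_prob: "prob_space G0"
  unfolding G0_def
  by (intro prob_space.prob_space_distr prob_space_PiM vec_lambda_measurable SN_prob)

lemma measurable_pair_cont:
  assumes "continuous_on UNIV (f :: real \<times> (real,'n::finite) vec \<Rightarrow> (real,'n) vec)"
    and "sets M1 = sets (borel::real measure)" and "sets M2 = sets (borel :: (real^'n) measure)"
  shows "f \<in> measurable (M1 \<Otimes>\<^sub>M M2) borel"
proof -
  have "f \<in> borel_measurable borel" using assms(1) by (rule borel_measurable_continuous_onI)
  then have "f \<in> measurable (borel \<Otimes>\<^sub>M borel) borel" by (simp add: borel_prod)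
  moreover have "sets (M1 \<Otimes>\<^sub>M M2) = sets (borel \<Otimes>\<^sub>M borel)"
    using assms(2,3) by (rule sets_pair_measure_cong)
  ultimately show ?thesis using measurable_cong_sets by blast
qed


theorem theorem5:
  fixes M :: "'a measure" and Y :: "'a \<Rightarrow> (real, 'p::{finite,wellorder}) vec"
    and xi d :: "(real, 'p::{finite,wellorder}) vec"
    and S :: "((real, 'p::{finite,wellorder}) vec, 'p::{finite,wellorder}) vec"
    and H :: "real \<Rightarrow> real"
  assumes "prob_space M"
    and "Y \<in> borel_measurable M"
    and "is_cdf H"
    and "sym_posdef S"
    and "sym_posdef (Omega_bar S - outer d)"
    and "distr M borel Y = MMN xi S d H"
  shows "\<exists>A :: ((real, 'p::{finite,wellorder}) vec, 'p::{finite,wellorder}) vec.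
    distr M borel (\<lambda>x. A *v (Y x - xi)) =
      MMN 0 (mat 1) (axis (LEAST i. True) (sqrt (d \<bullet> (matrix_inv (Omega_bar S) *v d)))) H"
proof -
  define Ob where "Ob = Omega_bar S"
  define X1 where "X1 = Ob - outer d"
  define e where "e = axis (LEAST i::'p. True) (sqrt (d \<bullet> (matrix_inv Ob *v d)))"
  define w where "w = omega_diag S"
  define IH where "IH = interval_measure H"
  have symX1: "transpose X1 = X1" and pdX1: "\<forall>x. x \<noteq> 0 \<longrightarrow> x \<bullet> (X1 *v x) > 0"
    using assms(5) by (auto simp: sym_posdef_def X1_def Ob_def)
  have symS: "S$i$j = S$j$i" for i j
    using assms(4) unfolding sym_posdef_def by (metis transpose_def vec_lambda_beta)
  have Sii: "S$i$i > 0" for i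
  proof -
    have "axis i (1::real) \<bullet> (S *v axis i 1) > 0"
      using assms(4) unfolding sym_posdef_def by (auto simp: vec_eq_iff axis_def)
    then show ?thesis by (simp add: inner_axis_left matrix_vector_mult_basis column_def)
  qed
  have X1s: "X1$i$j = X1$j$i" for i j
    using symX1 by (metis transpose_def vec_lambda_beta)
  have symOb: "transpose Ob = Ob"
  proof -
    have "Ob$i$j = Ob$j$i" for i j
      using X1s[of i j] by (simp add: X1_def outer_def mult.commute)
    then show ?thesis by (simp add: vec_eq_iff transpose_def)
  qed
  have pdOb: "\<forall>x. x \<noteq> 0 \<longrightarrow> x \<bullet> (Ob *v x) > 0"
  proof (intro allI impI)
    fix x :: "(real,'p) vec" assume "x \<noteq> 0"
    then have "x \<bullet> (X1 *v x) > 0" using pdX1 by blast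
    moreover have "x \<bullet> (Ob *v x) = x \<bullet> (X1 *v x) + (d \<bullet> x)^2"
      by (simp add: X1_def matrix_vector_mult_diff_rdistrib outer_mult inner_diff_right
          inner_commute[of x d] power2_eq_square)
    ultimately show "x \<bullet> (Ob *v x) > 0" by (metis add_pos_nonneg zero_le_power2)
  qed
  obtain B :: "((real,'p) vec,'p) vec" where B1: "B ** Ob ** transpose B = mat 1" and Bd: "B *v d = e"
    using whiten[OF symOb pdOb, of d "LEAST i. True"] e_def by blast
  obtain L1 :: "((real,'p) vec,'p) vec" where L1: "L1 ** transpose L1 = X1" "invertible L1"
    using cholesky[OF symX1 pdX1] by blast
  define W :: "((real,'p) vec,'p) vec" where "W = (\<chi> i j. if i = j then 1 / sqrt (S$i$i) else 0)"
  have Ww: "W ** w = mat 1"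
  proof -
    have "(W ** w)$i$j = (if i = j then 1 else 0)" for i j
    proof -
      have "(W ** w)$i$j = (\<Sum>k\<in>UNIV. (if i = k then 1 / sqrt (S$i$i) else 0) * (if k = j then sqrt (S$k$k) else 0))"
        by (simp add: matrix_matrix_mult_def W_def w_def omega_diag_def)
      also have "\<dots> = (if i = j then 1 else 0)"
        using Sii[of i] Sii[of j] by (simp add: if_distrib[of "\<lambda>x. x * _"] sum.delta cong: if_cong)
      finally show ?thesis .
    qed
    then show ?thesis by (simp add: vec_eq_iff mat_def)
  qed
  define A where "A = B ** W"
  have Aw: "A ** w = B" by (simp add: A_def matrix_mul_assoc[symmetric] Ww)
  have invB: "invertible B"
    using B1 invertible_right_inverse by (metis matrix_mul_assoc)
  define L2 where "L2 = B ** L1"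
  have invL2: "invertible L2" using invB L1(2) L2_def invertible_mult by blast
  have X2: "L2 ** transpose L2 = Omega_bar (mat 1) - outer e"
  proof -
    have "L2 ** transpose L2 = B ** X1 ** transpose B"
      by (simp add: L2_def matrix_transpose_mul matrix_mul_assoc L1(1)[symmetric])
    also have "\<dots> = B ** Ob ** transpose B - B ** outer d ** transpose B"
      by (simp add: X1_def mat_sub_ldistrib mat_sub_rdistrib)
    also have "\<dots> = mat 1 - outer e" by (simp add: B1 outer_congr Bd)
    finally show ?thesis by (simp add: Omega_bar_one)
  qed
  have GX1: "gaussian X1 = distr G0 borel (\<lambda>z. L1 *v z)"
    using gaussian_eq[OF L1(2)] L1(1) by simp
  have mG: "(\<lambda>x. C *v x) \<in> measurable G0 borel" for C :: "((real,'p) vec,'p) vec"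
    using measurable_cong_sets[OF sets_G0 refl] borel_mat_vec by blast
  have GX2: "gaussian (Omega_bar (mat 1) - outer e) = distr (gaussian X1) borel (\<lambda>z. B *v z)"
  proof -
    have "gaussian (Omega_bar (mat 1) - outer e) = distr G0 borel (\<lambda>z. L2 *v z)"
      using gaussian_eq[OF invL2] X2 by simp
    also have "\<dots> = distr G0 borel ((\<lambda>z. B *v z) \<circ> (\<lambda>z. L1 *v z))"
      by (simp add: comp_def L2_def matrix_vector_mul_assoc)
    also have "\<dots> = distr (gaussian X1) borel (\<lambda>z. B *v z)"
      unfolding GX1 by (rule distr_distr[symmetric]) (simp_all add: mG)
    finally show ?thesis .
  qed
  have sIH: "sets IH = sets borel" by (simp add: IH_def sets_interval_measure)
  have sGX1: "sets (gaussian X1) = sets borel" by (simp add: GX1)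
  have probGX1: "prob_space (gaussian X1)"
    unfolding GX1 by (intro prob_space.prob_space_distr G0_prob mG)
  have probIH: "prob_space IH"
    using assms(3) unfolding is_cdf_def IH_def
    by (intro real_distribution.axioms(1) real_distribution_interval_measure) auto
  have meas_h: "(\<lambda>(u::real, z). xi + w *v (u *\<^sub>R d + z)) \<in> measurable (IH \<Otimes>\<^sub>M gaussian X1) borel"
  proof -
    have "(\<lambda>(u::real, z). xi + w *v (u *\<^sub>R d + z)) = (\<lambda>p. xi + w *v (fst p *\<^sub>R d + snd p))"
      by auto
    moreover have "continuous_on UNIV (\<lambda>p::real \<times> (real,'p) vec. xi + w *v (fst p *\<^sub>R d + snd p))"
      by (intro continuous_intros)
    ultimately have "continuous_on UNIV (\<lambda>(u::real, z). xi + w *v (u *\<^sub>R d + z))" by simp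
    then show ?thesis by (rule measurable_pair_cont[OF _ sIH sGX1])
  qed
  show ?thesis
  proof (intro exI[of _ A])
    have "distr M borel (\<lambda>x. A *v (Y x - xi)) = distr (distr M borel Y) borel (\<lambda>y. A *v (y - xi))"
      by (rule distr_distr[symmetric, unfolded comp_def]) (use assms(2) in auto)
    also have "\<dots> = distr (distr (IH \<Otimes>\<^sub>M gaussian X1) borel (\<lambda>(u, z). xi + w *v (u *\<^sub>R d + z))) borel (\<lambda>y. A *v (y - xi))"
      unfolding assms(6) MMN_def IH_def w_def X1_def Ob_def ..
    also have "\<dots> = distr (IH \<Otimes>\<^sub>M gaussian X1) borel (\<lambda>(u, z). u *\<^sub>R e + B *v z)"
    proof -
      have "distr (distr (IH \<Otimes>\<^sub>M gaussian X1) borel (\<lambda>(u, z). xi + w *v (u *\<^sub>R d + z))) borel (\<lambda>y. A *v (y - xi))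
        = distr (IH \<Otimes>\<^sub>M gaussian X1) borel ((\<lambda>y. A *v (y - xi)) \<circ> (\<lambda>(u, z). xi + w *v (u *\<^sub>R d + z)))"
        by (rule distr_distr) (use meas_h in auto)
      also have "(\<lambda>y. A *v (y - xi)) \<circ> (\<lambda>(u, z). xi + w *v (u *\<^sub>R d + z)) = (\<lambda>(u, z). u *\<^sub>R e + B *v z)"
        by (auto simp: fun_eq_iff matrix_vector_mul_assoc Aw matrix_vector_right_distrib
            matrix_vector_mult_scaleR Bd)
      finally show ?thesis .
    qed
    also have "\<dots> = MMN 0 (mat 1) e H"
    proof -
      have mB: "(\<lambda>z. B *v z) \<in> measurable (gaussian X1) borel"
        using measurable_cong_sets[OF sGX1 refl] borel_mat_vec by blast
      have "prob_space (distr (gaussian X1) borel (\<lambda>z. B *v z))"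
        by (rule prob_space.prob_space_distr[OF probGX1 mB])
      then have sf: "sigma_finite_measure (distr (gaussian X1) borel (\<lambda>z. B *v z))"
        by (rule prob_space_imp_sigma_finite)
      have "IH \<Otimes>\<^sub>M distr (gaussian X1) borel (\<lambda>z. B *v z)
          = distr IH borel (\<lambda>x. x) \<Otimes>\<^sub>M distr (gaussian X1) borel (\<lambda>z. B *v z)"
        using sIH distr_id2[OF sIH[symmetric]] by simp
      also have "\<dots> = distr (IH \<Otimes>\<^sub>M gaussian X1) (borel \<Otimes>\<^sub>M borel) (\<lambda>(x, y). (x, B *v y))"
        by (rule pair_measure_distr[OF _ mB sf]) (simp add: measurable_cong_sets[OF sIH refl])
      finally have eq: "IH \<Otimes>\<^sub>M distr (gaussian X1) borel (\<lambda>z. B *v z)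
          = distr (IH \<Otimes>\<^sub>M gaussian X1) (borel \<Otimes>\<^sub>M borel) (\<lambda>(x, y). (x, B *v y))" .
      have mk: "(\<lambda>(x, y). (x, B *v y)) \<in> measurable (IH \<Otimes>\<^sub>M gaussian X1) (borel \<Otimes>\<^sub>M borel)"
      proof -
        have "sets (IH \<Otimes>\<^sub>M gaussian X1) = sets (borel \<Otimes>\<^sub>M borel)"
          using sIH sGX1 by (rule sets_pair_measure_cong)
        moreover have "(\<lambda>(x, y). (x, B *v y)) \<in> measurable (borel \<Otimes>\<^sub>M borel) (borel \<Otimes>\<^sub>M (borel :: ((real,'p) vec) measure))"
          by measurable
        ultimately show ?thesis using measurable_cong_sets by blast
      qed
      have mg: "(\<lambda>(u, z). 0 + omega_diag (mat 1) *v (u *\<^sub>R e + z)) \<in> measurable (borel \<Otimes>\<^sub>M borel) (borel :: ((real,'p) vec) measure)"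
      proof -
        have "(\<lambda>(u::real, z). 0 + omega_diag (mat 1) *v (u *\<^sub>R e + z)) = (\<lambda>p. 0 + omega_diag (mat 1) *v (fst p *\<^sub>R e + snd p))"
          by auto
        moreover have "continuous_on UNIV (\<lambda>p::real \<times> (real,'p) vec. 0 + omega_diag (mat 1) *v (fst p *\<^sub>R e + snd p))"
          by (intro continuous_intros)
        ultimately have "continuous_on UNIV (\<lambda>(u::real, z). 0 + omega_diag (mat 1) *v (u *\<^sub>R e + z))" by simp
        then show ?thesis by (rule measurable_pair_cont[OF _ refl refl])
      qed
      have "MMN 0 (mat 1) e H = distr (IH \<Otimes>\<^sub>M distr (gaussian X1) borel (\<lambda>z. B *v z)) borel
           (\<lambda>(u, z). 0 + omega_diag (mat 1) *v (u *\<^sub>R e + z))"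
        unfolding MMN_def GX2 IH_def ..
      also have "\<dots> = distr (IH \<Otimes>\<^sub>M gaussian X1) borel
           ((\<lambda>(u, z). 0 + omega_diag (mat 1) *v (u *\<^sub>R e + z)) \<circ> (\<lambda>(x, y). (x, B *v y)))"
        unfolding eq by (rule distr_distr[OF mg mk])
      also have "((\<lambda>(u, z). 0 + omega_diag (mat 1) *v (u *\<^sub>R e + z)) \<circ> (\<lambda>(x, y). (x, B *v y)))
           = (\<lambda>(u, z). u *\<^sub>R e + B *v z)"
        by (auto simp: fun_eq_iff omega_diag_one)
      finally show ?thesis by simp
    qed
    finally show "distr M borel (\<lambda>x. A *v (Y x - xi)) =
      MMN 0 (mat 1) (axis (LEAST i. True) (sqrt (d \<bullet> (matrix_inv (Omega_bar S) *v d)))) H"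
      by (simp add: e_def Ob_def)
  qed
qed


end
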